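(* Let $G$ be a group, let $\mathcal{R}=\mathbb{C}^N$ with standard basis $e_0,\dots,e_{N-1}$ and $\mathcal{H}=\mathbb{C}^N$ with computational basis $|0\rangle,\dots,|N-1\rangle$. Let $V:G\to\mathcal{U}(\mathcal{R})$ and $W:G\to\mathcal{U}(\mathcal{H})$ be unitary representations. Define, for nonzero $x=\sum_i x_ie_i$, $T(x)=\frac{1}{\|x\|}\sum_i x_i|i\rangle$ and $\hat{T}(x)=\sum_i x_i|i\rangle$, and let $A:G\to\mathcal{U}(\mathcal{H})$ be a representation induced by $\hat{T}$, i.e. $\hat{T}\circ V(g)=A(g)\circ\hat{T}$ for all $g\in G$. Let $U_{inv}$ and $U_\theta$ be unitaries on $\mathcal{H}$, let $\mathcal{O}$ be an observable on $\mathcal{H}$, and set $$h_\theta(x)=\operatorname{tr}\!\left[U_{inv}U_\theta T(x)\,(U_{inv}U_\theta T(x))^\dagger\,\mathcal{O}\right].$$ If $U_{inv}$ and $\mathcal{O}$ commute with $W(g)$ for all $g\in G$, and $U_\theta$ is an intertwining map from $A$ to $W$, i.e. $U_\theta A(g)=W(g)U_\theta$ for all $g\in G$, then $h_\theta(V(g)x)=h_\theta(x)$ for all $g\in G$ and all nonzero $x\in\mathcal{R}$.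
   Context: $\mathcal{U}(\cdot)$ denotes the group of unitary operators; a unitary representation is a homomorphism into it. $T(x)$ is viewed as a column vector so $T(x)T(x)^\dagger$ is the corresponding density matrix. *)

theory Defs
  imports "Jordan_Normal_Form.Matrix" "HOL-Algebra.Group"
begin

definition cadj :: "complex mat \<Rightarrow> complex mat" where
  "cadj A = mat (dim_col A) (dim_row A) (\<lambda>(i,j). cnj (A $$ (j,i)))"

definition unitary_mat :: "nat \<Rightarrow> complex mat \<Rightarrow> bool" where
  "unitary_mat N U \<longleftrightarrow> U \<in> carrier_mat N N \<and> cadj U * U = 1\<^sub>m N \<and> U * cadj U = 1\<^sub>m N"

text \<open>An observable is a Hermitian (self-adjoint) operator.\<close>
definition hermitian_mat :: "nat \<Rightarrow> complex mat \<Rightarrow> bool" where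
  "hermitian_mat N H \<longleftrightarrow> H \<in> carrier_mat N N \<and> cadj H = H"

definition unitary_rep :: "('g, 'b) monoid_scheme \<Rightarrow> nat \<Rightarrow> ('g \<Rightarrow> complex mat) \<Rightarrow> bool" where
  "unitary_rep G N V \<longleftrightarrow>
     (\<forall>g\<in>carrier G. unitary_mat N (V g)) \<and>
     (\<forall>g\<in>carrier G. \<forall>h\<in>carrier G. V (g \<otimes>\<^bsub>G\<^esub> h) = V g * V h)"

definition vnorm :: "complex vec \<Rightarrow> real" where
  "vnorm x = sqrt (\<Sum>i<dim_vec x. (cmod (x $ i))\<^sup>2)"

definition T_enc :: "complex vec \<Rightarrow> complex mat" where
  "T_enc x = mat (dim_vec x) 1 (\<lambda>(i,j). x $ i / complex_of_real (vnorm x))"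

definition That_enc :: "complex vec \<Rightarrow> complex mat" where
  "That_enc x = mat (dim_vec x) 1 (\<lambda>(i,j). x $ i)"

definition mtrace :: "complex mat \<Rightarrow> complex" where
  "mtrace M = (\<Sum>i<dim_row M. M $$ (i,i))"

definition h_theta :: "complex mat \<Rightarrow> complex mat \<Rightarrow> complex mat \<Rightarrow> complex vec \<Rightarrow> complex" where
  "h_theta Uinv Utheta Obs x =
     mtrace (Uinv * Utheta * T_enc x * cadj (Uinv * Utheta * T_enc x) * Obs)"

end

theory Submission imports Defs begin

lemma mtrace_comm: assumes "A \<in> carrier_mat n m" "B \<in> carrier_mat m n"
  shows "mtrace (A * B) = mtrace (B * A)"
proof -
  have "mtrace (A * B) = (\<Sum>i<n. \<Sum>j<m. A $$ (i,j) * B $$ (j,i))"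
    using assms unfolding mtrace_def
    by (auto simp: lessThan_atLeast0 scalar_prod_def intro!: sum.cong)
  also have "\<dots> = (\<Sum>j<m. \<Sum>i<n. B $$ (j,i) * A $$ (i,j))"
    by (subst sum.swap) (simp add: ac_simps)
  also have "\<dots> = mtrace (B * A)"
    using assms unfolding mtrace_def
    by (auto simp: lessThan_atLeast0 scalar_prod_def intro!: sum.cong)
  finally show ?thesis .
qed

lemma vnorm_sq: "(cadj (That_enc z) * That_enc z) $$ (0,0) = complex_of_real ((vnorm z)^2)"
  unfolding vnorm_def That_enc_def cadj_def
  by (auto simp: scalar_prod_def lessThan_atLeast0 sum_nonneg mult.commute intro!: sum.cong)
    (metis complex_norm_square of_real_power)


lemma cadj_carrier[simp]: "A \<in> carrier_mat n m \<Longrightarrow> cadj A \<in> carrier_mat m n"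
  by (auto simp: cadj_def)

lemma cadj_dims[simp]: "dim_row (cadj A) = dim_col A" "dim_col (cadj A) = dim_row A"
  by (auto simp: cadj_def)

lemma cadj_mult: assumes "A \<in> carrier_mat nr n" "B \<in> carrier_mat n nc"
  shows "cadj (A * B) = cadj B * cadj A"
  using assms by (intro eq_matI) (auto simp: cadj_def scalar_prod_def ac_simps)

lemma That_carrier[simp]: "x \<in> carrier_vec N \<Longrightarrow> That_enc x \<in> carrier_mat N 1"
  by (auto simp: That_enc_def)

lemma T_carrier[simp]: "x \<in> carrier_vec N \<Longrightarrow> T_enc x \<in> carrier_mat N 1"
  by (auto simp: T_enc_def)

lemma T_That: "T_enc x = (1 / complex_of_real (vnorm x)) \<cdot>\<^sub>m That_enc x"
  by (auto simp: T_enc_def That_enc_def)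

theorem proposition2:
  fixes G :: "('g, 'b) monoid_scheme"
    and N :: nat
    and V W A :: "'g \<Rightarrow> complex mat"
    and Uinv Utheta Obs :: "complex mat"
  assumes "group G"
    and "unitary_rep G N V"
    and "unitary_rep G N W"
    and "unitary_rep G N A"
    and "\<forall>g\<in>carrier G. \<forall>x\<in>carrier_vec N. That_enc (V g *\<^sub>v x) = A g * That_enc x"
    and "unitary_mat N Uinv"
    and "unitary_mat N Utheta"
    and "hermitian_mat N Obs"
    and "\<forall>g\<in>carrier G. Uinv * W g = W g * Uinv"
    and "\<forall>g\<in>carrier G. Obs * W g = W g * Obs"
    and "\<forall>g\<in>carrier G. Utheta * A g = W g * Utheta"
  shows "\<forall>g\<in>carrier G. \<forall>x\<in>carrier_vec N. x \<noteq> 0\<^sub>v N \<longrightarrow>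
           h_theta Uinv Utheta Obs (V g *\<^sub>v x) = h_theta Uinv Utheta Obs x"
proof (intro ballI impI)
  fix g and x :: "complex vec" assume g: "g \<in> carrier G" and x: "x \<in> carrier_vec N"
  have Vu: "unitary_mat N (V g)" and Wu: "unitary_mat N (W g)" and Au: "unitary_mat N (A g)"
    using assms(2,3,4) g unfolding unitary_rep_def by auto
  have VC: "V g \<in> carrier_mat N N" and WC: "W g \<in> carrier_mat N N" and AC: "A g \<in> carrier_mat N N"
   and AA: "cadj (A g) * A g = 1\<^sub>m N" and WW: "cadj (W g) * W g = 1\<^sub>m N" and WW': "W g * cadj (W g) = 1\<^sub>m N"
    using Vu Wu Au unfolding unitary_mat_def by auto
  have UC: "Uinv \<in> carrier_mat N N" "Utheta \<in> carrier_mat N N" "Obs \<in> carrier_mat N N"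
    using assms(6,7,8) unfolding unitary_mat_def hermitian_mat_def by auto
  define y where "y = V g *\<^sub>v x"
  have y: "y \<in> carrier_vec N" using VC x by (simp add: y_def)
  define X where "X = That_enc x"
  have XC: "X \<in> carrier_mat N 1" unfolding X_def by (rule That_carrier[OF x])
  have TC: "T_enc x \<in> carrier_mat N 1" by (rule T_carrier[OF x])
  have Ty: "That_enc y = A g * X" using assms(5) g x by (simp add: y_def X_def)
  have "complex_of_real ((vnorm y)^2) = (cadj (A g * X) * (A g * X)) $$ (0,0)"
    using vnorm_sq[of y] Ty by simp
  also have "cadj (A g * X) * (A g * X) = cadj X * (cadj (A g) * A g) * X"
  proof -
    have cX: "cadj X \<in> carrier_mat 1 N" using XC by simp
    have cA: "cadj (A g) \<in> carrier_mat N N" using AC by simp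
    have "cadj X * (cadj (A g) * A g) * X = cadj X * ((cadj (A g) * A g) * X)"
      using cX cA AC XC by (meson assoc_mult_mat mult_carrier_mat)
    also have "\<dots> = cadj X * (cadj (A g) * (A g * X))"
      using cA AC XC by (metis assoc_mult_mat)
    also have "\<dots> = (cadj X * cadj (A g)) * (A g * X)"
      using assoc_mult_mat[OF cX cA mult_carrier_mat[OF AC XC]] by simp
    finally show ?thesis unfolding cadj_mult[OF AC XC] by simp
  qed
  also have "\<dots> = cadj X * X" using AA XC by simp
  finally have "complex_of_real ((vnorm y)^2) = complex_of_real ((vnorm x)^2)"
    using vnorm_sq[of x] by (simp add: X_def)
  hence "(vnorm y)^2 = (vnorm x)^2" using of_real_eq_iff by blast
  moreover have "vnorm y \<ge> 0" "vnorm x \<ge> 0" by (simp_all add: vnorm_def sum_nonneg)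
  ultimately have nv: "vnorm y = vnorm x" using power2_eq_iff_nonneg by blast
  have TyA: "T_enc y = A g * T_enc x"
    unfolding T_That nv Ty X_def using mult_smult_distrib[OF AC That_carrier[OF x]] by simp
  define M where "M = Uinv * Utheta * T_enc x"
  have MC: "M \<in> carrier_mat N 1" using UC TC unfolding M_def by (metis mult_carrier_mat)
  note as = assoc_mult_mat[of _ N N _ N _ N] assoc_mult_mat[of _ N N _ N _ 1]
  note mc = mult_carrier_mat[of _ N N _ N] mult_carrier_mat[of _ N N _ 1]
  have PC: "Uinv * Utheta \<in> carrier_mat N N" using UC mc by blast
  have "Uinv * Utheta * T_enc y = (Uinv * Utheta * A g) * T_enc x"
    unfolding TyA using assoc_mult_mat[OF PC AC TC] by simp
  also have "Uinv * Utheta * A g = Uinv * (Utheta * A g)" using assoc_mult_mat[OF UC(1,2) AC] .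
  also have "\<dots> = Uinv * (W g * Utheta)" using assms(11) g by simp
  also have "\<dots> = (Uinv * W g) * Utheta" using assoc_mult_mat[OF UC(1) WC UC(2)] by simp
  also have "Uinv * W g = W g * Uinv" using assms(9) g by simp
  also have "W g * Uinv * Utheta = W g * (Uinv * Utheta)" using assoc_mult_mat[OF WC UC(1,2)] .
  also have "W g * (Uinv * Utheta) * T_enc x = W g * M"
    unfolding M_def using assoc_mult_mat[OF WC PC TC] .
  finally have My: "Uinv * Utheta * T_enc y = W g * M" .
  have cWC: "cadj (W g) \<in> carrier_mat N N" using WC by simp
  have OW: "cadj (W g) * Obs = Obs * cadj (W g)"
  proof -
    have "cadj (W g) * Obs = cadj (W g) * Obs * (W g * cadj (W g))" using WW' UC WC by simp
    also have "\<dots> = cadj (W g) * (Obs * W g) * cadj (W g)" using UC WC cWC by (simp add: as mc)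
    also have "\<dots> = cadj (W g) * (W g * Obs) * cadj (W g)" using assms(10) g by simp
    also have "\<dots> = (cadj (W g) * W g) * Obs * cadj (W g)" using UC WC cWC by (simp add: as mc)
    finally show ?thesis using WW UC WC by simp
  qed
  define R where "R = M * cadj M"
  have RC: "R \<in> carrier_mat N N" unfolding R_def using mult_carrier_mat[OF MC cadj_carrier[OF MC]] .
  have "W g * M * cadj (W g * M) = W g * R * cadj (W g)"
  proof -
    have cMC: "cadj M \<in> carrier_mat 1 N" using MC by simp
    have "W g * M * cadj (W g * M) = W g * (M * (cadj M * cadj (W g)))"
      unfolding cadj_mult[OF WC MC] using assoc_mult_mat[OF WC MC mult_carrier_mat[OF cMC cWC]] .
    also have "M * (cadj M * cadj (W g)) = R * cadj (W g)"
      unfolding R_def using assoc_mult_mat[OF MC cMC cWC] by simp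
    also have "W g * (R * cadj (W g)) = W g * R * cadj (W g)"
      using assoc_mult_mat[OF WC RC cWC] by simp
    finally show ?thesis .
  qed
  hence "h_theta Uinv Utheta Obs y = mtrace (W g * R * cadj (W g) * Obs)"
    unfolding h_theta_def My by simp
  also have "W g * R * cadj (W g) * Obs = W g * (R * Obs) * cadj (W g)"
    using WC RC cWC UC by (simp add: as mc OW)
  also have "mtrace \<dots> = mtrace (cadj (W g) * (W g * (R * Obs)))"
    using mtrace_comm[of "W g * (R * Obs)" N N "cadj (W g)"] WC RC UC cWC mc by simp
  also have "cadj (W g) * (W g * (R * Obs)) = (cadj (W g) * W g) * (R * Obs)"
    using assoc_mult_mat[OF cWC WC mc(1)[OF RC UC(3)]] by simp
  also have "mtrace \<dots> = mtrace (R * Obs)" using WW RC UC by (simp add: mc)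
  finally show "h_theta Uinv Utheta Obs (V g *\<^sub>v x) = h_theta Uinv Utheta Obs x"
    by (simp add: y_def h_theta_def M_def R_def)
qed

end
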